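(* Let $H$ be a complex Hilbert space and let $A$ and $B$ be self-adjoint operators in $H$, at least one of which is positive, such that $D(A^2)=D(B^2)$. Let $T=A+iB$ (defined on $D(A)\cap D(B)$). If $T^2\subset 0$, then $T=0$ everywhere on $H$.
   Context: Products are taken on natural domains $D(ST)=\{x\in D(T):Tx\in D(S)\}$ and sums on $D(S+T)=D(S)\cap D(T)$. $T^2\subset 0$ means $T^2x=0$ for all $x\in D(T^2)$. A self-adjoint $A$ is positive if $\langle Ax,x\rangle\geq 0$ for all $x\in D(A)$. "$T=0$ everywhere on $H$" means $D(T)=H$ and $Tx=0$ for all $x\in H$. *)

theory Defs
  imports "HOL-Analysis.Analysis"
begin

class complex_inner = real_normed_vector +
  fixes scaleC :: "complex \<Rightarrow> 'a \<Rightarrow> 'a"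
    and cinner :: "'a \<Rightarrow> 'a \<Rightarrow> complex"
  assumes scaleC_of_real: "scaleC (of_real r) x = scaleR r x"
    and scaleC_add_right: "scaleC a (x + y) = scaleC a x + scaleC a y"
    and scaleC_add_left: "scaleC (a + b) x = scaleC a x + scaleC b x"
    and scaleC_scaleC: "scaleC a (scaleC b x) = scaleC (a * b) x"
    and cinner_add_left: "cinner (x + y) z = cinner x z + cinner y z"
    and cinner_scaleC_left: "cinner (scaleC a x) y = cnj a * cinner x y"
    and cinner_commute: "cinner x y = cnj (cinner y x)"
    and cinner_ge_zero: "0 \<le> Re (cinner x x)"
    and cinner_eq_zero_iff: "cinner x x = 0 \<longleftrightarrow> x = 0"
    and norm_eq_sqrt_cinner: "norm x = sqrt (Re (cinner x x))"

class chilbert_space = complex_inner + complete_space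

type_synonym 'a op = "'a \<Rightarrow> 'a option"

text \<open>Product on the natural domain D(ST) = {x in D(T). Tx in D(S)}: this is map composition.\<close>
definition op_mult :: "'a op \<Rightarrow> 'a op \<Rightarrow> 'a op" where
  "op_mult S T = S \<circ>\<^sub>m T"

definition op_plus :: "('a::plus) op \<Rightarrow> 'a op \<Rightarrow> 'a op" where
  "op_plus S T = (\<lambda>x. case (S x, T x) of (Some a, Some b) \<Rightarrow> Some (a + b) | _ \<Rightarrow> None)"

definition op_scale :: "complex \<Rightarrow> ('a::complex_inner) op \<Rightarrow> 'a op" where
  "op_scale c T = (\<lambda>x. map_option (scaleC c) (T x))"

definition op_adjoint :: "('a::complex_inner) op \<Rightarrow> 'a op" where
  "op_adjoint T = (\<lambda>y. if \<exists>z. \<forall>x\<in>dom T. cinner (the (T x)) y = cinner x z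
                        then Some (THE z. \<forall>x\<in>dom T. cinner (the (T x)) y = cinner x z)
                        else None)"

definition densely_defined :: "('a::complex_inner) op \<Rightarrow> bool" where
  "densely_defined T \<longleftrightarrow> closure (dom T) = UNIV"

definition self_adjoint :: "('a::complex_inner) op \<Rightarrow> bool" where
  "self_adjoint T \<longleftrightarrow> densely_defined T \<and> op_adjoint T = T"

definition positive_op :: "('a::complex_inner) op \<Rightarrow> bool" where
  "positive_op A \<longleftrightarrow> self_adjoint A \<and> (\<forall>x\<in>dom A. 0 \<le> Re (cinner (the (A x)) x))"

end

theory Submission
  imports Defs
begin


lemma complex_cs_aux:
  fixes qaa qbb :: real and qab :: complex
  assumes pos: "\<And>s::complex. 0 \<le> qaa + 2 * Re (s * qab) + (cmod s)\<^sup>2 * qbb"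
    and "0 \<le> qbb"
  shows "(cmod qab)\<^sup>2 \<le> qaa * qbb"
proof (cases "qbb = 0")
  case True
  have "qab = 0"
  proof (rule ccontr)
    assume ne: "qab \<noteq> 0"
    define t where "t = (\<bar>qaa\<bar> + 1) / (cmod qab)\<^sup>2"
    have tpos: "t > 0" using ne by (simp add: t_def)
    have "Re (of_real (-t) * cnj qab * qab) = - t * (cmod qab)\<^sup>2"
      by (simp add: complex_mult_cnj cmod_def power2_eq_square mult.assoc)
    moreover have "t * (cmod qab)\<^sup>2 = \<bar>qaa\<bar> + 1" using ne by (simp add: t_def)
    moreover have "0 \<le> qaa + 2 * Re (of_real (-t) * cnj qab * qab)"
      using pos[of "of_real (-t) * cnj qab"] True by simp
    ultimately show False by linarith
  qed
  then show ?thesis using True by simp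
next
  case False
  then have qp: "qbb > 0" using assms(2) by simp
  define s where "s = - cnj qab / of_real qbb"
  have "Re (s * qab) = - (cmod qab)\<^sup>2 / qbb"
    unfolding s_def using qp
    by (simp add: complex_mult_cnj cmod_def power2_eq_square Re_divide_of_real mult.commute)
      (simp add: field_simps)
  moreover have "(cmod s)\<^sup>2 = (cmod qab)\<^sup>2 / qbb\<^sup>2"
    unfolding s_def using qp by (simp add: norm_divide power_divide)
  moreover have "0 \<le> qaa + 2 * Re (s * qab) + (cmod s)\<^sup>2 * qbb" by (rule pos)
  ultimately have "0 \<le> qaa + 2 * (- (cmod qab)\<^sup>2 / qbb) + (cmod qab)\<^sup>2 / qbb\<^sup>2 * qbb" by simp
  also have "\<dots> = qaa - (cmod qab)\<^sup>2 / qbb" using qp by (simp add: power2_eq_square field_simps)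
  finally have "(cmod qab)\<^sup>2 / qbb \<le> qaa" by simp
  then show ?thesis using qp by (simp add: field_simps)
qed


lemma scaleC_zero_left [simp]: "scaleC 0 (x::'a::complex_inner) = 0"
  using scaleC_of_real[of 0 x] by simp
lemma scaleC_one [simp]: "scaleC 1 (x::'a::complex_inner) = x"
  using scaleC_of_real[of 1 x] by simp
lemma scaleC_zero_right [simp]: "scaleC a (0::'a::complex_inner) = 0"
  using scaleC_add_right[of a 0 0] by simp
lemma scaleC_minus_left: "scaleC (- a) (x::'a::complex_inner) = - scaleC a x"
  using scaleC_add_left[of "-a" a x] by (simp add: eq_neg_iff_add_eq_0)
lemma scaleC_minus_right: "scaleC a (- x::'a::complex_inner) = - scaleC a x"
  using scaleC_add_right[of a "-x" x] by (simp add: eq_neg_iff_add_eq_0)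
lemma scaleC_diff_right: "scaleC a (x - y::'a::complex_inner) = scaleC a x - scaleC a y"
  using scaleC_add_right[of a x "-y"] by (simp add: scaleC_minus_right)
lemma scaleC_diff_left: "scaleC (a - b) (x::'a::complex_inner) = scaleC a x - scaleC b x"
  using scaleC_add_left[of a "-b" x] by (simp add: scaleC_minus_left)
lemma scaleC_eq_0_iff: "scaleC a (x::'a::complex_inner) = 0 \<longleftrightarrow> a = 0 \<or> x = 0"
proof
  assume h: "scaleC a x = 0"
  show "a = 0 \<or> x = 0"
  proof (rule ccontr)
    assume "\<not> (a = 0 \<or> x = 0)"
    then have "a \<noteq> 0" "x \<noteq> 0" by auto
    have "scaleC (inverse a) (scaleC a x) = x" using \<open>a \<noteq> 0\<close> by (simp add: scaleC_scaleC)
    then show False using h \<open>x \<noteq> 0\<close> by simp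
  qed
qed auto

lemma cinner_zero_left [simp]: "cinner 0 (y::'a::complex_inner) = 0"
  using cinner_add_left[of 0 0 y] by simp
lemma cinner_add_right: "cinner (x::'a::complex_inner) (y + z) = cinner x y + cinner x z"
  by (metis cinner_commute cinner_add_left complex_cnj_add)
lemma cinner_scaleC_right: "cinner (x::'a::complex_inner) (scaleC a y) = a * cinner x y"
  by (metis cinner_commute cinner_scaleC_left complex_cnj_cnj complex_cnj_mult)
lemma cinner_zero_right [simp]: "cinner (x::'a::complex_inner) 0 = 0"
  using cinner_add_right[of x 0 0] by simp
lemma cinner_minus_left: "cinner (- x::'a::complex_inner) y = - cinner x y"
  using cinner_add_left[of x "-x" y] by (simp add: eq_neg_iff_add_eq_0 add.commute)
lemma cinner_minus_right: "cinner (x::'a::complex_inner) (- y) = - cinner x y"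
  using cinner_add_right[of x y "-y"] by (simp add: eq_neg_iff_add_eq_0 add.commute)
lemma cinner_diff_left: "cinner (x - y::'a::complex_inner) z = cinner x z - cinner y z"
  using cinner_add_left[of x "-y" z] by (simp add: cinner_minus_left)
lemma cinner_diff_right: "cinner (x::'a::complex_inner) (y - z) = cinner x y - cinner x z"
  using cinner_add_right[of x y "-z"] by (simp add: cinner_minus_right)

lemma cinner_self_Im: "Im (cinner (x::'a::complex_inner) x) = 0"
  using cinner_commute[of x x] by (simp add: complex_eq_iff)
lemma cinner_self_norm: "cinner (x::'a::complex_inner) x = of_real ((norm x)\<^sup>2)"
proof -
  have "(norm x)\<^sup>2 = Re (cinner x x)" using norm_eq_sqrt_cinner[of x] cinner_ge_zero[of x] by simp
  then show ?thesis using cinner_self_Im[of x] by (simp add: complex_eq_iff)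
qed
lemma norm_sq_cinner: "(norm (x::'a::complex_inner))\<^sup>2 = Re (cinner x x)"
  using norm_eq_sqrt_cinner[of x] cinner_ge_zero[of x] by simp

lemma cinner_expand:
  "cinner (a + scaleC s b) (a + scaleC s (b::'a::complex_inner)) =
     cinner a a + s * cinner a b + cnj s * cinner b a + cnj s * s * cinner b b"
  by (simp add: cinner_add_left cinner_add_right cinner_scaleC_left cinner_scaleC_right algebra_simps)

lemma Cauchy_Schwarz_c: "cmod (cinner (x::'a::complex_inner) y) \<le> norm x * norm y"
proof -
  have "(cmod (cinner x y))\<^sup>2 \<le> (norm x)\<^sup>2 * (norm y)\<^sup>2"
  proof (rule complex_cs_aux)
    fix s :: complex
    have f1: "Re (cinner (x + scaleC s y) (x + scaleC s y)) \<ge> 0" by (rule cinner_ge_zero)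
    have f2: "Re (cnj s * cinner y x) = Re (s * cinner x y)"
    proof -
      have "cnj s * cinner y x = cnj (s * cinner x y)" by (subst cinner_commute[of y x]) simp
      then show ?thesis by (simp only: cnj.sel(1))
    qed
    have f3: "Re (cnj s * s * cinner y y) = (cmod s)\<^sup>2 * (norm y)\<^sup>2"
    proof -
      have "cnj s * s = of_real ((cmod s)\<^sup>2)" using complex_norm_square[of s] by (simp add: mult.commute)
      then show ?thesis by (simp add: cinner_self_norm del: of_real_power)
    qed
    show "0 \<le> (norm x)\<^sup>2 + 2 * Re (s * cinner x y) + (cmod s)\<^sup>2 * (norm y)\<^sup>2"
    proof -
      note e = cinner_expand[of x s y]
      have "Re (cinner (x + scaleC s y) (x + scaleC s y)) = Re (cinner x x) + Re (s * cinner x y)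
          + Re (cnj s * cinner y x) + Re (cnj s * s * cinner y y)"
        unfolding e by (simp only: plus_complex.sel)
      then show ?thesis using f1 f2 f3 by (simp only: norm_sq_cinner)
    qed
  qed simp
  then have "(cmod (cinner x y))\<^sup>2 \<le> (norm x * norm y)\<^sup>2" by (simp add: power_mult_distrib)
  then show ?thesis by (rule power2_le_imp_le) simp
qed



lemma cinner_scaleR_left: "cinner (r *\<^sub>R (x::'a::complex_inner)) y = r *\<^sub>R cinner x y"
  by (simp add: scaleC_of_real[symmetric] cinner_scaleC_left scaleR_conv_of_real)
lemma cinner_scaleR_right: "cinner (x::'a::complex_inner) (r *\<^sub>R y) = r *\<^sub>R cinner x y"
  by (simp add: scaleC_of_real[symmetric] cinner_scaleC_right scaleR_conv_of_real)

lemma bounded_bilinear_cinner: "bounded_bilinear (cinner :: 'a::complex_inner \<Rightarrow> 'a \<Rightarrow> complex)"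
proof
  fix a a' b b' :: 'a and r :: real
  show "cinner (a + a') b = cinner a b + cinner a' b" by (rule cinner_add_left)
  show "cinner b (a + a') = cinner b a + cinner b a'" by (rule cinner_add_right)
  show "cinner (r *\<^sub>R a) b = r *\<^sub>R cinner a b" by (rule cinner_scaleR_left)
  show "cinner a (r *\<^sub>R b) = r *\<^sub>R cinner a b" by (rule cinner_scaleR_right)
next
  show "\<exists>K. \<forall>a b::'a. norm (cinner a b) \<le> norm a * norm b * K"
    by (rule exI[of _ 1]) (simp add: Cauchy_Schwarz_c)
qed

lemma tendsto_cinner [tendsto_intros]:
  "(f \<longlongrightarrow> a) F \<Longrightarrow> (g \<longlongrightarrow> b) F \<Longrightarrow> ((\<lambda>x. cinner (f x) (g x)) \<longlongrightarrow> cinner a b) F"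
  by (rule bounded_bilinear.tendsto[OF bounded_bilinear_cinner])

lemma cinner_self_eq_0: "cinner x x = 0 \<longleftrightarrow> (x::'a::complex_inner) = 0"
  by (rule cinner_eq_zero_iff)

lemma dense_orth_zero:
  fixes S :: "'a::complex_inner set"
  assumes "closure S = UNIV" and "\<And>x. x \<in> S \<Longrightarrow> cinner x z = 0"
  shows "z = 0"
proof -
  have "z \<in> closure S" using assms(1) by simp
  then obtain s where s: "\<And>n. s n \<in> S" "s \<longlonglongrightarrow> z" by (meson closure_sequential)
  have "(\<lambda>n. cinner (s n) z) \<longlonglongrightarrow> cinner z z" by (intro tendsto_intros s(2))
  moreover have "(\<lambda>n. cinner (s n) z) = (\<lambda>n. 0)" using s(1) assms(2) by auto
  ultimately have "(\<lambda>n. 0) \<longlonglongrightarrow> cinner z z" by simp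
  then have "cinner z z = 0" by (simp add: LIMSEQ_const_iff)
  then show ?thesis by (simp add: cinner_eq_zero_iff)
qed

lemma sa_dense: "self_adjoint A \<Longrightarrow> closure (dom A) = UNIV"
  by (simp add: self_adjoint_def densely_defined_def)

lemma sa_adj:
  fixes A :: "('a::complex_inner) op"
  assumes sa: "self_adjoint A"
  shows "A y = Some z \<longleftrightarrow> (\<forall>x\<in>dom A. cinner (the (A x)) y = cinner x z)"
proof -
  define Q where "Q = (\<lambda>z. \<forall>x\<in>dom A. cinner (the (A x)) y = cinner x z)"
  have eq: "op_adjoint A = A" using sa by (simp add: self_adjoint_def)
  have adj: "op_adjoint A y = (if \<exists>z. Q z then Some (THE z. Q z) else None)"
    unfolding op_adjoint_def Q_def by simp
  have uniq: "z1 = z2" if "Q z1" "Q z2" for z1 z2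
  proof -
    have "z1 - z2 = 0"
    proof (rule dense_orth_zero[OF sa_dense[OF sa]])
      fix x assume "x \<in> dom A"
      then show "cinner x (z1 - z2) = 0" using that unfolding Q_def by (simp add: cinner_diff_right)
    qed
    then show ?thesis by simp
  qed
  have th: "(THE z. Q z) = z'" if "Q z'" for z'
    by (rule the_equality) (use that uniq in blast)+
  have "A y = Some z \<longleftrightarrow> Q z"
  proof
    assume h: "A y = Some z"
    then have "op_adjoint A y = Some z" using eq by simp
    then have ex: "\<exists>z. Q z" unfolding adj by (cases "\<exists>z. Q z") simp_all
    with \<open>op_adjoint A y = Some z\<close> have th2: "(THE z. Q z) = z" unfolding adj by simp
    from ex obtain z' where z': "Q z'" by blast
    then show "Q z" using th[OF z'] th2 by simp
  next
    assume h: "Q z"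
    then have "op_adjoint A y = Some z" unfolding adj using th[OF h] by auto
    then show "A y = Some z" using eq by simp
  qed
  then show ?thesis unfolding Q_def .
qed

lemma sa_sym:
  assumes "self_adjoint A" "x \<in> dom A" "y \<in> dom A"
  shows "cinner (the (A x)) y = cinner x (the (A y))"
proof -
  from assms(3) have "A y = Some (the (A y))" by auto
  then show ?thesis using sa_adj[OF assms(1)] assms(2) by blast
qed

lemma sa_some: "x \<in> dom A \<Longrightarrow> A x = Some (the (A x))"
  by auto

lemma sa_add:
  assumes sa: "self_adjoint A" and "x \<in> dom A" "y \<in> dom A"
  shows "A (x + y) = Some (the (A x) + the (A y))"
  unfolding sa_adj[OF sa]
  using sa_sym[OF sa] assms by (simp add: cinner_add_right)

lemma sa_scale:
  assumes sa: "self_adjoint A" and "x \<in> dom A"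
  shows "A (scaleC c x) = Some (scaleC c (the (A x)))"
  unfolding sa_adj[OF sa]
  using sa_sym[OF sa] assms by (simp add: cinner_scaleC_right)

lemma sa_zero:
  assumes sa: "self_adjoint A"
  shows "A 0 = Some 0"
  unfolding sa_adj[OF sa] by simp

lemma sa_minus:
  assumes sa: "self_adjoint A" and "x \<in> dom A"
  shows "A (- x) = Some (- the (A x))"
  using sa_scale[OF sa assms(2), of "-1"] by (simp add: scaleC_minus_left)

lemma sa_diff:
  assumes sa: "self_adjoint A" and "x \<in> dom A" "y \<in> dom A"
  shows "A (x - y) = Some (the (A x) - the (A y))"
proof -
  have "- y \<in> dom A" using sa_minus[OF sa assms(3)] by auto
  then show ?thesis using sa_add[OF sa assms(2), of "-y"] sa_minus[OF sa assms(3)] by simp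
qed

lemma sa_dom_add: "self_adjoint A \<Longrightarrow> x \<in> dom A \<Longrightarrow> y \<in> dom A \<Longrightarrow> x + y \<in> dom A"
  using sa_add by blast
lemma sa_dom_diff: "self_adjoint A \<Longrightarrow> x \<in> dom A \<Longrightarrow> y \<in> dom A \<Longrightarrow> x - y \<in> dom A"
  using sa_diff by blast
lemma sa_dom_scale: "self_adjoint A \<Longrightarrow> x \<in> dom A \<Longrightarrow> scaleC c x \<in> dom A"
  using sa_scale by blast
lemma sa_dom_zero: "self_adjoint A \<Longrightarrow> 0 \<in> dom A"
  using sa_zero by blast

lemma sa_real:
  assumes sa: "self_adjoint A" and "x \<in> dom A"
  shows "cinner (the (A x)) x = of_real (Re (cinner (the (A x)) x))"
proof -
  have "cinner (the (A x)) x = cinner x (the (A x))" using sa_sym[OF sa assms(2) assms(2)] .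
  also have "\<dots> = cnj (cinner (the (A x)) x)" by (rule cinner_commute)
  finally show ?thesis by (simp add: complex_eq_iff)
qed

lemma sa_closed:
  assumes sa: "self_adjoint A" and x: "\<And>n. x n \<in> dom A" and "x \<longlonglongrightarrow> a"
    and "(\<lambda>n. the (A (x n))) \<longlonglongrightarrow> b"
  shows "A a = Some b"
  unfolding sa_adj[OF sa]
proof
  fix u assume u: "u \<in> dom A"
  have "(\<lambda>n. cinner (the (A u)) (x n)) \<longlonglongrightarrow> cinner (the (A u)) a"
    by (intro tendsto_intros assms(3))
  moreover have "(\<lambda>n. cinner u (the (A (x n)))) \<longlonglongrightarrow> cinner u b"
    by (intro tendsto_intros assms(4))
  moreover have "(\<lambda>n. cinner (the (A u)) (x n)) = (\<lambda>n. cinner u (the (A (x n))))"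
    using sa_sym[OF sa u x] by simp
  ultimately show "cinner (the (A u)) a = cinner u b" using LIMSEQ_unique by simp
qed



lemma norm_add_sq: "(norm (a + b :: 'a::complex_inner))\<^sup>2 = (norm a)\<^sup>2 + (norm b)\<^sup>2 + 2 * Re (cinner a b)"
proof -
  have "Re (cinner b a) = Re (cinner a b)" by (subst cinner_commute) (simp only: cnj.sel(1))
  then show ?thesis by (simp add: norm_sq_cinner cinner_add_left cinner_add_right)
qed

lemma norm_diff_sq: "(norm (a - b :: 'a::complex_inner))\<^sup>2 = (norm a)\<^sup>2 + (norm b)\<^sup>2 - 2 * Re (cinner a b)"
  using norm_add_sq[of a "-b"] by (simp add: cinner_minus_right)

lemma parallelogram: "(norm (a + b :: 'a::complex_inner))\<^sup>2 + (norm (a - b))\<^sup>2 = 2 * (norm a)\<^sup>2 + 2 * (norm b)\<^sup>2"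
  by (simp add: norm_add_sq norm_diff_sq)

lemma norm_scaleC: "norm (scaleC s (v::'a::complex_inner)) = cmod s * norm v"
proof -
  have "of_real ((norm (scaleC s v))\<^sup>2) = cnj s * s * of_real ((norm v)\<^sup>2)"
    using cinner_self_norm[of "scaleC s v"] cinner_self_norm[of v]
    by (simp add: cinner_scaleC_left cinner_scaleC_right mult.assoc mult.left_commute del: of_real_power)
  also have "cnj s * s = of_real ((cmod s)\<^sup>2)" using complex_norm_square[of s] by (simp add: mult.commute)
  finally have "of_real ((norm (scaleC s v))\<^sup>2) = (of_real ((cmod s * norm v)\<^sup>2) :: complex)"
    by (simp add: power_mult_distrib del: of_real_power)
  then have "(norm (scaleC s v))\<^sup>2 = (cmod s * norm v)\<^sup>2" using of_real_eq_iff by blast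
  then show ?thesis by (rule power2_eq_imp_eq) auto
qed

lemma orth_from_min:
  fixes w v :: "'a::complex_inner"
  assumes "\<And>s. (norm w)\<^sup>2 \<le> (norm (w - scaleC s v))\<^sup>2"
  shows "cinner w v = 0"
proof -
  have "(cmod (- cinner w v))\<^sup>2 \<le> 0 * (norm v)\<^sup>2"
  proof (rule complex_cs_aux)
    fix s :: complex
    have e: "(norm (w - scaleC s v))\<^sup>2 = (norm w)\<^sup>2 + (norm (scaleC s v))\<^sup>2 - 2 * Re (cinner w (scaleC s v))"
      by (rule norm_diff_sq)
    have "(norm (scaleC s v))\<^sup>2 = (cmod s)\<^sup>2 * (norm v)\<^sup>2"
      by (simp add: norm_scaleC power_mult_distrib)
    moreover have "Re (cinner w (scaleC s v)) = Re (s * cinner w v)" by (simp add: cinner_scaleC_right)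
    moreover have "Re (s * - cinner w v) = - Re (s * cinner w v)" by simp
    ultimately show "0 \<le> 0 + 2 * Re (s * - cinner w v) + (cmod s)\<^sup>2 * (norm v)\<^sup>2"
      using assms[of s] e by linarith
  qed simp
  then have "cmod (cinner w v) = 0" by simp
  then show ?thesis by simp
qed

lemma closed_subspace_full:
  fixes M :: "'a::chilbert_space set"
  assumes cl: "closed M" and z: "0 \<in> M"
    and add: "\<And>x y. x \<in> M \<Longrightarrow> y \<in> M \<Longrightarrow> x + y \<in> M"
    and sc: "\<And>c x. x \<in> M \<Longrightarrow> scaleC c x \<in> M"
    and orth: "\<And>w. (\<And>m. m \<in> M \<Longrightarrow> cinner m w = 0) \<Longrightarrow> w = 0"
  shows "h \<in> M"
proof -
  define d where "d = infdist h M"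
  have d0: "d \<ge> 0" unfolding d_def by (rule infdist_nonneg)
  have dle: "d \<le> norm (h - m)" if "m \<in> M" for m
    unfolding d_def using infdist_le[OF that, of h] by (simp add: dist_norm)
  have near: "\<exists>m\<in>M. norm (h - m) < d + e" if "e > 0" for e
  proof -
    have eqd: "d = (INF a\<in>M. dist h a)" unfolding d_def using z by (intro infdist_notempty) auto
    have "(INF a\<in>M. dist h a) < d + e" using that unfolding eqd[symmetric] by simp
    moreover have "bdd_below ((\<lambda>a. dist h a) ` M)" by (rule bdd_belowI[of _ 0]) auto
    moreover have "M \<noteq> {}" using z by blast
    ultimately have "\<exists>m\<in>M. dist h m < d + e" using cINF_less_iff[of M "\<lambda>a. dist h a" "d + e"] by blast
    then obtain m where "m \<in> M" "dist h m < d + e" by blast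
    then show ?thesis by (auto simp: dist_norm)
  qed
  have "\<forall>n. \<exists>m. m \<in> M \<and> norm (h - m) < d + 1 / (Suc n)"
  proof
    fix n :: nat
    have "(0::real) < 1 / Suc n" by simp
    from near[OF this] show "\<exists>m. m \<in> M \<and> norm (h - m) < d + 1 / (Suc n)" by blast
  qed
  then have "\<exists>m. \<forall>n. m n \<in> M \<and> norm (h - m n) < d + 1 / (Suc n)" by (rule choice)
  then obtain m where mM: "\<And>n. m n \<in> M" and mn: "\<And>n. norm (h - m n) < d + 1 / (Suc n)"
    by blast
  define eps where "eps = (\<lambda>n::nat. (2 * d + 1) / Suc n)"
  have sq: "(norm (h - m n))\<^sup>2 \<le> d\<^sup>2 + eps n" for n
  proof -
    have "(norm (h - m n))\<^sup>2 \<le> (d + 1 / Suc n)\<^sup>2"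
      using mn[of n] by (intro power_mono) auto
    also have "\<dots> = d\<^sup>2 + (2 * d + 1 / Suc n) / Suc n"
    proof -
      have N: "real (Suc n) \<noteq> 0" by simp
      show ?thesis using N by (simp add: power2_eq_square field_simps del: of_nat_Suc)
    qed
    also have "\<dots> \<le> d\<^sup>2 + eps n" unfolding eps_def using d0
      by (intro add_left_mono divide_right_mono) auto
    finally show ?thesis .
  qed
  have pair: "(norm (m n - m k))\<^sup>2 \<le> 2 * eps n + 2 * eps k" for n k
  proof -
    have mid: "scaleC (1/2) (m n + m k) \<in> M" using mM add sc by blast
    have "(h - m n) + (h - m k) = 2 *\<^sub>R (h - scaleC (1/2) (m n + m k))"
    proof -
      have "scaleC (of_real (1/2)) (m n + m k) = (1/2) *\<^sub>R (m n + m k)" by (rule scaleC_of_real)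
      then have "scaleC (1/2) (m n + m k) = (1/2) *\<^sub>R (m n + m k)" by simp
      then show ?thesis by (simp add: algebra_simps scaleR_add_right scaleR_2)
    qed
    then have "(norm ((h - m n) + (h - m k)))\<^sup>2 = 4 * (norm (h - scaleC (1/2) (m n + m k)))\<^sup>2"
      by (simp add: power2_eq_square)
    moreover have "d\<^sup>2 \<le> (norm (h - scaleC (1/2) (m n + m k)))\<^sup>2"
      using dle[OF mid] d0 by (intro power_mono) auto
    moreover have "(h - m n) - (h - m k) = m k - m n" by simp
    moreover have "norm (m k - m n) = norm (m n - m k)" by (rule norm_minus_commute)
    ultimately show ?thesis using parallelogram[of "h - m n" "h - m k"] sq[of n] sq[of k] by simp
  qed
  have inv0: "(\<lambda>n. inverse (real (Suc n))) \<longlonglongrightarrow> 0" by (rule LIMSEQ_inverse_real_of_nat)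
  have "(\<lambda>n. (2 * d + 1) * inverse (real (Suc n))) \<longlonglongrightarrow> 0"
    using tendsto_mult_right_zero[OF inv0, of "2 * d + 1"] .
  moreover have "eps = (\<lambda>n. (2 * d + 1) * inverse (real (Suc n)))"
    unfolding eps_def by (simp add: divide_inverse del: of_nat_Suc)
  ultimately have epsto: "eps \<longlonglongrightarrow> 0" by simp
  have "Cauchy m"
  proof (rule metric_CauchyI)
    fix e :: real assume e: "e > 0"
    from epsto have "\<forall>\<^sub>F n in sequentially. eps n < e\<^sup>2 / 4" using e
      by (intro order_tendstoD) auto
    then obtain N where N: "\<And>n. n \<ge> N \<Longrightarrow> eps n < e\<^sup>2 / 4" by (auto simp: eventually_sequentially)
    show "\<exists>M. \<forall>n\<ge>M. \<forall>k\<ge>M. dist (m n) (m k) < e"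
    proof (intro exI allI impI)
      fix n k assume "n \<ge> N" "k \<ge> N"
      then have "(norm (m n - m k))\<^sup>2 < e\<^sup>2" using pair[of n k] N[of n] N[of k] by simp
      then have "norm (m n - m k) < e" using e by (simp add: power_less_imp_less_base)
      then show "dist (m n) (m k) < e" by (simp add: dist_norm)
    qed
  qed
  then obtain m0 where lim: "m \<longlonglongrightarrow> m0" using Cauchy_convergent convergent_def by blast
  have m0M: "m0 \<in> M" using closed_sequentially[OF cl mM lim] .
  have "(\<lambda>n. norm (h - m n)) \<longlonglongrightarrow> norm (h - m0)" by (intro tendsto_intros lim)
  moreover have "(\<lambda>n. d + 1 / Suc n) \<longlonglongrightarrow> d + 0"
    using tendsto_add[OF tendsto_const[of d] inv0] by (simp add: divide_inverse del: of_nat_Suc)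
  ultimately have "norm (h - m0) \<le> d" using mn
    by (intro LIMSEQ_le[of "\<lambda>n. norm (h - m n)" _ "\<lambda>n. d + 1 / Suc n"]) (auto intro: less_imp_le)
  have orthm: "cinner (h - m0) v = 0" if v: "v \<in> M" for v
  proof (rule orth_from_min)
    fix s
    have "m0 + scaleC s v \<in> M" using add sc m0M v by blast
    then have "d \<le> norm (h - (m0 + scaleC s v))" by (rule dle)
    then have "norm (h - m0) \<le> norm (h - m0 - scaleC s v)" using \<open>norm (h - m0) \<le> d\<close> by (simp add: algebra_simps)
    then show "(norm (h - m0))\<^sup>2 \<le> (norm (h - m0 - scaleC s v))\<^sup>2" by (intro power_mono) auto
  qed
  have "h - m0 = 0"
  proof (intro orth)
    fix v assume "v \<in> M"
    have "cinner v (h - m0) = cnj (cinner (h - m0) v)" by (rule cinner_commute)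
    then show "cinner v (h - m0) = 0" using orthm[OF \<open>v \<in> M\<close>] by simp
  qed
  then show ?thesis using m0M by simp
qed



lemma tendsto_scaleC:
  fixes f :: "'b \<Rightarrow> 'a::complex_inner"
  assumes "(f \<longlongrightarrow> a) F"
  shows "((\<lambda>x. scaleC c (f x)) \<longlongrightarrow> scaleC c a) F"
proof -
  have "((\<lambda>x. f x - a) \<longlongrightarrow> 0) F" using assms by (simp add: LIM_zero_iff)
  then have "((\<lambda>x. norm (f x - a)) \<longlongrightarrow> 0) F" by (simp add: tendsto_norm_zero_iff)
  then have "((\<lambda>x. cmod c * norm (f x - a)) \<longlongrightarrow> cmod c * 0) F" by (intro tendsto_intros)
  then have "((\<lambda>x. norm (scaleC c (f x) - scaleC c a)) \<longlongrightarrow> 0) F"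
    by (simp add: scaleC_diff_right[symmetric] norm_scaleC)
  then have "((\<lambda>x. scaleC c (f x) - scaleC c a) \<longlongrightarrow> 0) F" by (simp add: tendsto_norm_zero_iff)
  then show ?thesis by (simp add: LIM_zero_iff)
qed

lemma sa_res_norm:
  assumes sa: "self_adjoint A" and x: "x \<in> dom A"
  shows "(norm (the (A x) + scaleC (\<i> * of_real t) x))\<^sup>2 = (norm (the (A x)))\<^sup>2 + t\<^sup>2 * (norm x)\<^sup>2"
proof -
  have r: "cinner (the (A x)) x = of_real (Re (cinner (the (A x)) x))" by (rule sa_real[OF sa x])
  have "Re (cinner (the (A x)) (scaleC (\<i> * of_real t) x)) = 0"
    by (subst cinner_scaleC_right, subst r) simp
  moreover have "norm (scaleC (\<i> * of_real t) x) = \<bar>t\<bar> * norm x"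
    by (simp add: norm_scaleC norm_mult)
  ultimately show ?thesis by (simp add: norm_add_sq power_mult_distrib)
qed

lemma sa_res_surj:
  fixes A :: "('a::chilbert_space) op"
  assumes sa: "self_adjoint A" and t: "t \<noteq> 0"
  shows "\<exists>x\<in>dom A. the (A x) + scaleC (\<i> * of_real t) x = h"
proof -
  define c where "c = \<i> * of_real t"
  define M where "M = (\<lambda>x. the (A x) + scaleC c x) ` dom A"
  have bound: "norm x \<le> norm (the (A x) + scaleC c x) / \<bar>t\<bar>" if "x \<in> dom A" for x
  proof -
    have "t\<^sup>2 * (norm x)\<^sup>2 \<le> (norm (the (A x) + scaleC c x))\<^sup>2"
      using sa_res_norm[OF sa that, of t] unfolding c_def by simp
    then have "(\<bar>t\<bar> * norm x)\<^sup>2 \<le> (norm (the (A x) + scaleC c x))\<^sup>2"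
      by (simp add: power_mult_distrib)
    then have "\<bar>t\<bar> * norm x \<le> norm (the (A x) + scaleC c x)"
      by (rule power2_le_imp_le) simp
    then show ?thesis using t by (simp add: field_simps)
  qed
  have "h \<in> M"
  proof (rule closed_subspace_full)
    show "0 \<in> M" unfolding M_def using sa_zero[OF sa] by (auto intro!: image_eqI[of _ _ 0])
  next
    fix x y assume "x \<in> M" "y \<in> M"
    then obtain u v where u: "u \<in> dom A" "x = the (A u) + scaleC c u"
      and v: "v \<in> dom A" "y = the (A v) + scaleC c v" unfolding M_def by auto
    have "the (A (u + v)) + scaleC c (u + v) = x + y"
      using sa_add[OF sa u(1) v(1)] u v by (simp add: scaleC_add_right algebra_simps)
    moreover have "u + v \<in> dom A" using sa_dom_add[OF sa u(1) v(1)] .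
    ultimately show "x + y \<in> M" unfolding M_def by (auto intro!: image_eqI[of _ _ "u + v"])
  next
    fix d x assume "x \<in> M"
    then obtain u where u: "u \<in> dom A" "x = the (A u) + scaleC c u" unfolding M_def by auto
    have "the (A (scaleC d u)) + scaleC c (scaleC d u) = scaleC d x"
      using sa_scale[OF sa u(1), of d] u by (simp add: scaleC_add_right scaleC_scaleC mult.commute)
    moreover have "scaleC d u \<in> dom A" using sa_dom_scale[OF sa u(1)] .
    ultimately show "scaleC d x \<in> M" unfolding M_def by (auto intro!: image_eqI[of _ _ "scaleC d u"])
  next
    show "closed M"
    proof (rule closed_sequential_limits[THEN iffD2], intro allI impI, elim conjE)
      fix y l assume yM: "\<forall>n. y n \<in> M" and yl: "y \<longlonglongrightarrow> l"
      have "\<forall>n. \<exists>u. u \<in> dom A \<and> y n = the (A u) + scaleC c u"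
      proof
        fix n
        have "y n \<in> M" using yM by simp
        then obtain u where "u \<in> dom A" "y n = the (A u) + scaleC c u" unfolding M_def by (rule imageE)
        then show "\<exists>u. u \<in> dom A \<and> y n = the (A u) + scaleC c u" by blast
      qed
      then obtain x where x: "\<And>n. x n \<in> dom A" and xy: "\<And>n. y n = the (A (x n)) + scaleC c (x n)"
        using choice[of "\<lambda>n u. u \<in> dom A \<and> y n = the (A u) + scaleC c u"] by blast
      have "Cauchy y" using yl by (rule LIMSEQ_imp_Cauchy)
      have "Cauchy x"
      proof (rule metric_CauchyI)
        fix e :: real assume e: "e > 0"
        then have "e * \<bar>t\<bar> > 0" using t by simp
        then obtain N where N: "\<And>m n. m \<ge> N \<Longrightarrow> n \<ge> N \<Longrightarrow> dist (y m) (y n) < e * \<bar>t\<bar>"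
          using \<open>Cauchy y\<close> unfolding Cauchy_def by blast
        show "\<exists>N. \<forall>m\<ge>N. \<forall>n\<ge>N. dist (x m) (x n) < e"
        proof (intro exI allI impI)
          fix m n assume mn: "m \<ge> N" "n \<ge> N"
          have dd: "x m - x n \<in> dom A" using sa_dom_diff[OF sa x x] .
          have "the (A (x m - x n)) + scaleC c (x m - x n) = y m - y n"
            using sa_diff[OF sa x x, of m n] xy[of m] xy[of n] by (simp add: scaleC_diff_right algebra_simps)
          then have "norm (x m - x n) \<le> norm (y m - y n) / \<bar>t\<bar>" using bound[OF dd] by simp
          also have "\<dots> < e" using N[OF mn] t by (simp add: dist_norm field_simps)
          finally show "dist (x m) (x n) < e" by (simp add: dist_norm)
        qed
      qed
      then obtain a where xa: "x \<longlonglongrightarrow> a" using Cauchy_convergent convergent_def by blast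
      have "(\<lambda>n. y n - scaleC c (x n)) \<longlonglongrightarrow> l - scaleC c a"
      proof -
        have "(\<lambda>n. scaleC c (x n)) \<longlonglongrightarrow> scaleC c a" by (rule tendsto_scaleC[OF xa])
        then show ?thesis by (intro tendsto_intros yl)
      qed
      moreover have "(\<lambda>n. y n - scaleC c (x n)) = (\<lambda>n. the (A (x n)))" using xy by simp
      ultimately have "A a = Some (l - scaleC c a)" using sa_closed[OF sa x xa] by simp
      then have "a \<in> dom A" "the (A a) + scaleC c a = l" by auto
      then show "l \<in> M" unfolding M_def by (auto intro!: image_eqI[of _ _ a])
    qed
  next
    fix w assume orth: "\<And>m. m \<in> M \<Longrightarrow> cinner m w = 0"
    have "\<forall>x\<in>dom A. cinner (the (A x)) w = cinner x (scaleC (- cnj c) w)"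
    proof
      fix x assume x: "x \<in> dom A"
      have "cinner (the (A x) + scaleC c x) w = 0" using orth x unfolding M_def by auto
      then show "cinner (the (A x)) w = cinner x (scaleC (- cnj c) w)"
        by (simp add: cinner_add_left cinner_scaleC_left cinner_scaleC_right eq_neg_iff_add_eq_0)
    qed
    then have Aw: "A w = Some (scaleC (- cnj c) w)" using sa_adj[OF sa] by blast
    then have wd: "w \<in> dom A" by auto
    have "cinner (the (A w)) w = of_real (Re (cinner (the (A w)) w))" by (rule sa_real[OF sa wd])
    moreover have "cinner (the (A w)) w = - c * cinner w w"
      using Aw by (simp add: cinner_scaleC_left)
    ultimately have "Im (- c * cinner w w) = 0" by (metis Im_complex_of_real)
    then have "t * (norm w)\<^sup>2 = 0" unfolding c_def by (simp add: cinner_self_norm)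
    then show "w = 0" using t by simp
  qed
  then show ?thesis unfolding M_def c_def by auto
qed

lemma sa_sq_surj:
  fixes A :: "('a::chilbert_space) op"
  assumes sa: "self_adjoint A"
  shows "\<exists>x. x \<in> dom A \<and> the (A x) \<in> dom A \<and> the (A (the (A x))) + x = h"
proof -
  obtain y where y: "y \<in> dom A" "the (A y) + scaleC (\<i> * of_real (-1)) y = h"
    using sa_res_surj[OF sa, of "-1" h] by auto
  obtain x where x: "x \<in> dom A" "the (A x) + scaleC (\<i> * of_real 1) x = y"
    using sa_res_surj[OF sa, of 1 y] by auto
  have Ax: "the (A x) = y - scaleC \<i> x" using x(2) by (simp add: algebra_simps)
  have ix: "scaleC \<i> x \<in> dom A" using sa_dom_scale[OF sa x(1)] .
  have AxD: "the (A x) \<in> dom A" unfolding Ax using sa_dom_diff[OF sa y(1) ix] .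
  have e1: "A (y - scaleC \<i> x) = Some (the (A y) - the (A (scaleC \<i> x)))"
    using sa_diff[OF sa y(1) ix] .
  have e2: "the (A (scaleC \<i> x)) = scaleC \<i> (the (A x))"
    using sa_scale[OF sa x(1), of \<i>] by simp
  have "the (A (the (A x))) = the (A (y - scaleC \<i> x))" by (simp only: Ax)
  also have "\<dots> = the (A y) - scaleC \<i> (the (A x))" using e1 e2 by simp
  also have "\<dots> = the (A y) - scaleC \<i> (y - scaleC \<i> x)" by (simp only: Ax)
  also have "\<dots> = the (A y) - scaleC \<i> y - x"
  proof -
    have "scaleC \<i> (scaleC \<i> x) = - x" by (simp add: scaleC_scaleC scaleC_minus_left)
    then show ?thesis by (simp add: scaleC_diff_right)
  qed
  finally have "the (A (the (A x))) + x = the (A y) - scaleC \<i> y" by simp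
  also have "\<dots> = h" using y(2) by (simp add: scaleC_minus_left)
  finally show ?thesis using x(1) AxD by blast
qed

lemma sa_sq_inner:
  assumes sa: "self_adjoint A" and x: "x \<in> dom A" and Ax: "the (A x) \<in> dom A"
  shows "cinner (the (A (the (A x))) + x) x = of_real ((norm (the (A x)))\<^sup>2 + (norm x)\<^sup>2)"
proof -
  have "cinner (the (A (the (A x)))) x = cinner (the (A x)) (the (A x))"
    using sa_sym[OF sa Ax x] .
  then show ?thesis by (simp add: cinner_add_left cinner_self_norm)
qed

lemma sa_sq_inj:
  assumes sa: "self_adjoint A" and x: "x \<in> dom A" and Ax: "the (A x) \<in> dom A"
    and "the (A (the (A x))) + x = 0"
  shows "x = 0"
proof -
  have "of_real ((norm (the (A x)))\<^sup>2 + (norm x)\<^sup>2) = (0::complex)"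
    using sa_sq_inner[OF sa x Ax] assms(4) by simp
  then have "(norm (the (A x)))\<^sup>2 + (norm x)\<^sup>2 = 0" by (simp only: of_real_eq_0_iff)
  then show ?thesis by (simp add: add_nonneg_eq_0_iff)
qed



lemma continuous_on_cinner_left: "continuous_on UNIV (\<lambda>x. cinner (x::'a::complex_inner) g)"
  by (intro bounded_bilinear.continuous_on[OF bounded_bilinear_cinner] continuous_on_id continuous_on_const)

lemma closure_subspace:
  fixes S :: "'a::complex_inner set"
  assumes z: "0 \<in> S" and add: "\<And>x y. x \<in> S \<Longrightarrow> y \<in> S \<Longrightarrow> x + y \<in> S"
    and sc: "\<And>c x. x \<in> S \<Longrightarrow> scaleC c x \<in> S"
  shows "0 \<in> closure S" "\<And>x y. x \<in> closure S \<Longrightarrow> y \<in> closure S \<Longrightarrow> x + y \<in> closure S"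
    "\<And>c x. x \<in> closure S \<Longrightarrow> scaleC c x \<in> closure S"
proof -
  show "0 \<in> closure S" using z closure_subset by blast
next
  fix x y assume "x \<in> closure S" "y \<in> closure S"
  then obtain a b where a: "\<And>n. a n \<in> S" "a \<longlonglongrightarrow> x" and b: "\<And>n. b n \<in> S" "b \<longlonglongrightarrow> y"
    by (meson closure_sequential)
  have "(\<lambda>n. a n + b n) \<longlonglongrightarrow> x + y" by (intro tendsto_intros a b)
  moreover have "\<And>n. a n + b n \<in> S" using a b add by blast
  ultimately show "x + y \<in> closure S" by (meson closure_sequential)
next
  fix c x assume "x \<in> closure S"
  then obtain a where a: "\<And>n. a n \<in> S" "a \<longlonglongrightarrow> x" by (meson closure_sequential)
  have "(\<lambda>n. scaleC c (a n)) \<longlonglongrightarrow> scaleC c x" by (rule tendsto_scaleC[OF a(2)])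
  moreover have "\<And>n. scaleC c (a n) \<in> S" using a sc by blast
  ultimately show "scaleC c x \<in> closure S" by (meson closure_sequential)
qed

lemma dense_of_orth:
  fixes S :: "'a::chilbert_space set"
  assumes z: "0 \<in> S" and add: "\<And>x y. x \<in> S \<Longrightarrow> y \<in> S \<Longrightarrow> x + y \<in> S"
    and sc: "\<And>c x. x \<in> S \<Longrightarrow> scaleC c x \<in> S"
    and orth: "\<And>w. (\<And>y. y \<in> S \<Longrightarrow> cinner y w = 0) \<Longrightarrow> w = 0"
  shows "closure S = UNIV"
proof -
  have "h \<in> closure S" for h
  proof (rule closed_subspace_full)
    show "closed (closure S)" by simp
    show "0 \<in> closure S" using closure_subspace[OF z add sc] by blast
    show "\<And>x y. x \<in> closure S \<Longrightarrow> y \<in> closure S \<Longrightarrow> x + y \<in> closure S"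
      using closure_subspace(2)[OF z add sc] by blast
    show "\<And>c x. x \<in> closure S \<Longrightarrow> scaleC c x \<in> closure S"
      using closure_subspace(3)[OF z add sc] by blast
    fix w assume "\<And>m. m \<in> closure S \<Longrightarrow> cinner m w = 0"
    then show "w = 0" using orth closure_subset by blast
  qed
  then show ?thesis by auto
qed

lemma dense_bound:
  fixes S :: "'a::complex_inner set"
  assumes "closure S = UNIV" and c: "c \<ge> 0" and b: "\<And>y. y \<in> S \<Longrightarrow> cmod (cinner w y) \<le> c * norm y"
  shows "norm w \<le> c"
proof -
  have "w \<in> closure S" using assms(1) by simp
  then obtain a where a: "\<And>n. a n \<in> S" "a \<longlonglongrightarrow> w" by (meson closure_sequential)
  have "(\<lambda>n. cmod (cinner w (a n))) \<longlonglongrightarrow> cmod (cinner w w)" by (intro tendsto_intros a(2))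
  moreover have "(\<lambda>n. c * norm (a n)) \<longlonglongrightarrow> c * norm w" by (intro tendsto_intros a(2))
  ultimately have "cmod (cinner w w) \<le> c * norm w"
    using b a(1) by (intro LIMSEQ_le[of "\<lambda>n. cmod (cinner w (a n))" _ "\<lambda>n. c * norm (a n)"]) auto
  moreover have "cmod (cinner w w) = norm w * norm w"
    unfolding cinner_self_norm norm_of_real by (simp add: power2_eq_square)
  ultimately have "norm w * norm w \<le> c * norm w" by simp
  then show ?thesis using c by (cases "norm w = 0") (auto simp: mult_le_cancel_right)
qed

lemma ubp:
  fixes g :: "'i \<Rightarrow> 'a::chilbert_space"
  assumes pw: "\<And>x. \<exists>K. \<forall>i\<in>I. cmod (cinner x (g i)) \<le> K"
  shows "\<exists>K. \<forall>i\<in>I. norm (g i) \<le> K"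
proof -
  define E where "E = (\<lambda>n::nat. {x. \<forall>i\<in>I. cmod (cinner x (g i)) \<le> real n})"
  have clE: "closed (E n)" for n
  proof -
    have "E n = (\<Inter>i\<in>I. {x. cmod (cinner x (g i)) \<le> real n})" unfolding E_def by auto
    moreover have "closed {x. cmod (cinner x (g i)) \<le> real n}" for i
      by (intro closed_Collect_le continuous_on_norm continuous_on_cinner_left continuous_on_const)
    ultimately show ?thesis by auto
  qed
  have cov: "\<Union>(range E) = UNIV"
  proof -
    have "x \<in> \<Union>(range E)" for x
    proof -
      obtain K where K: "\<forall>i\<in>I. cmod (cinner x (g i)) \<le> K" using pw by blast
      obtain n :: nat where "K \<le> real n" using real_arch_simple by blast
      then have "x \<in> E n" unfolding E_def using K by force
      then show ?thesis by blast
    qed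
    then show ?thesis by blast
  qed
  have "\<exists>n. interior (E n) \<noteq> {}"
  proof (rule ccontr)
    assume "\<not> (\<exists>n. interior (E n) \<noteq> {})"
    then have "\<And>T. T \<in> range E \<Longrightarrow> closedin euclidean T \<and> euclidean interior_of T = {}"
      using clE by (auto simp: closed_closedin[symmetric])
    then have "euclidean interior_of \<Union>(range E) = {}"
      by (intro Baire_category_alt) (auto simp: completely_metrizable_space_euclidean)
    then show False using cov by simp
  qed
  then obtain n x0 where "x0 \<in> interior (E n)" by blast
  then obtain r where r: "r > 0" "ball x0 r \<subseteq> E n" using open_contains_ball_eq open_interior interior_subset
    by (metis subset_trans)
  have "norm (g i) \<le> 4 * real n / r" if i: "i \<in> I" for i
  proof (cases "g i = 0")
    case True then show ?thesis using r by simp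
  next
    case False
    define z where "z = scaleC (of_real (r / 2 / norm (g i))) (g i)"
    have pos: "r / 2 / norm (g i) > 0" using False r by simp
    have "norm z = \<bar>r / 2 / norm (g i)\<bar> * norm (g i)" unfolding z_def norm_scaleC norm_of_real ..
    also have "\<dots> = r / 2" using pos False r by simp
    finally have nz: "norm z = r / 2" .
    have "x0 + z \<in> E n" using r nz by (intro subsetD[OF r(2)]) (simp add: dist_norm)
    moreover have "x0 \<in> E n" using r by (intro subsetD[OF r(2)]) simp
    ultimately have b1: "cmod (cinner (x0 + z) (g i)) \<le> real n" and b2: "cmod (cinner x0 (g i)) \<le> real n"
      unfolding E_def using i by auto
    have "cinner z (g i) = of_real (r / 2 / norm (g i) * (norm (g i))\<^sup>2)"
      unfolding z_def by (simp add: cinner_scaleC_left cinner_self_norm)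
    also have "\<dots> = of_real (r / 2 * norm (g i))" using False by (simp add: power2_eq_square)
    finally have "cmod (cinner z (g i)) = \<bar>r / 2 * norm (g i)\<bar>" by (simp only: norm_of_real)
    then have "cmod (cinner z (g i)) = r / 2 * norm (g i)" using r by simp
    moreover have "cmod (cinner z (g i)) \<le> cmod (cinner (x0 + z) (g i)) + cmod (cinner x0 (g i))"
      using norm_triangle_ineq4[of "cinner (x0 + z) (g i)" "cinner x0 (g i)"]
      by (simp add: cinner_add_left)
    ultimately have "r / 2 * norm (g i) \<le> 2 * real n" using b1 b2 by linarith
    then show ?thesis using r by (simp add: field_simps)
  qed
  then show ?thesis by blast
qed



definition D2 :: "('a::complex_inner) op \<Rightarrow> 'a set" where
  "D2 A = {x. x \<in> dom A \<and> the (A x) \<in> dom A}"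
definition SQ :: "('a::complex_inner) op \<Rightarrow> 'a \<Rightarrow> 'a" where
  "SQ A x = the (A (the (A x))) + x"
definition RES :: "('a::complex_inner) op \<Rightarrow> 'a \<Rightarrow> 'a" where
  "RES A h = (SOME x. x \<in> D2 A \<and> SQ A x = h)"

context
  fixes A :: "('a::chilbert_space) op"
  assumes sa: "self_adjoint A"
begin

lemma D2_dom: "x \<in> D2 A \<Longrightarrow> x \<in> dom A" and D2_Adom: "x \<in> D2 A \<Longrightarrow> the (A x) \<in> dom A"
  unfolding D2_def by auto

lemma D2_zero: "0 \<in> D2 A"
  unfolding D2_def using sa_zero[OF sa] by auto

lemma D2_add: "x \<in> D2 A \<Longrightarrow> y \<in> D2 A \<Longrightarrow> x + y \<in> D2 A"
  unfolding D2_def using sa_add[OF sa] sa_dom_add[OF sa] by auto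

lemma D2_scale: "x \<in> D2 A \<Longrightarrow> scaleC c x \<in> D2 A"
  unfolding D2_def using sa_scale[OF sa] sa_dom_scale[OF sa] by auto

lemma D2_diff: "x \<in> D2 A \<Longrightarrow> y \<in> D2 A \<Longrightarrow> x - y \<in> D2 A"
  unfolding D2_def using sa_diff[OF sa] sa_dom_diff[OF sa] by auto

lemma SQ_add: "x \<in> D2 A \<Longrightarrow> y \<in> D2 A \<Longrightarrow> SQ A (x + y) = SQ A x + SQ A y"
  unfolding D2_def SQ_def using sa_add[OF sa] by auto

lemma SQ_scale: "x \<in> D2 A \<Longrightarrow> SQ A (scaleC c x) = scaleC c (SQ A x)"
  unfolding D2_def SQ_def using sa_scale[OF sa] by (auto simp: scaleC_add_right)

lemma SQ_diff: "x \<in> D2 A \<Longrightarrow> y \<in> D2 A \<Longrightarrow> SQ A (x - y) = SQ A x - SQ A y"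
  unfolding D2_def SQ_def using sa_diff[OF sa] by auto

lemma SQ_sym: "x \<in> D2 A \<Longrightarrow> y \<in> D2 A \<Longrightarrow> cinner (SQ A x) y = cinner x (SQ A y)"
  unfolding D2_def SQ_def
  using sa_sym[OF sa] by (auto simp: cinner_add_left cinner_add_right)

lemma SQ_inner: "x \<in> D2 A \<Longrightarrow> cinner (SQ A x) x = of_real ((norm (the (A x)))\<^sup>2 + (norm x)\<^sup>2)"
  unfolding D2_def SQ_def using sa_sq_inner[OF sa] by auto

lemma SQ_surj: "\<exists>x. x \<in> D2 A \<and> SQ A x = h"
  unfolding D2_def SQ_def using sa_sq_surj[OF sa] by auto

lemma SQ_inj: "x \<in> D2 A \<Longrightarrow> SQ A x = 0 \<Longrightarrow> x = 0"
  unfolding D2_def SQ_def using sa_sq_inj[OF sa] by auto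

lemma RES: "RES A h \<in> D2 A" "SQ A (RES A h) = h"
proof -
  have "RES A h \<in> D2 A \<and> SQ A (RES A h) = h"
    unfolding RES_def by (rule someI_ex) (rule SQ_surj)
  then show "RES A h \<in> D2 A" "SQ A (RES A h) = h" by auto
qed

lemma RES_unique: "x \<in> D2 A \<Longrightarrow> SQ A x = h \<Longrightarrow> RES A h = x"
proof -
  assume x: "x \<in> D2 A" and h: "SQ A x = h"
  have "SQ A (RES A h - x) = 0" using SQ_diff[OF RES(1) x] RES(2) h by simp
  then have "RES A h - x = 0" using SQ_inj D2_diff[OF RES(1) x] by blast
  then show ?thesis by simp
qed

lemma RES_SQ: "x \<in> D2 A \<Longrightarrow> RES A (SQ A x) = x"
  using RES_unique by blast

lemma RES_add: "RES A (a + b) = RES A a + RES A b"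
  by (rule RES_unique) (simp_all add: D2_add RES SQ_add)

lemma RES_scale: "RES A (scaleC c a) = scaleC c (RES A a)"
  by (rule RES_unique) (simp_all add: D2_scale RES SQ_scale)

lemma RES_diff: "RES A (a - b) = RES A a - RES A b"
  by (rule RES_unique) (simp_all add: D2_diff RES SQ_diff)

lemma RES_zero: "RES A 0 = 0"
  using RES_unique[OF D2_zero] SQ_scale[OF D2_zero, of 0] by simp

lemma RES_sym: "cinner (RES A a) b = cinner a (RES A b)"
proof -
  have "cinner (RES A a) b = cinner (RES A a) (SQ A (RES A b))" by (simp only: RES(2))
  also have "\<dots> = cinner (SQ A (RES A a)) (RES A b)" by (rule SQ_sym[OF RES(1) RES(1), symmetric])
  also have "\<dots> = cinner a (RES A b)" by (simp only: RES(2))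
  finally show ?thesis .
qed

lemma SQ_norm_ge: "x \<in> D2 A \<Longrightarrow> (norm (the (A x)))\<^sup>2 + (norm x)\<^sup>2 \<le> norm (SQ A x) * norm x"
proof -
  assume x: "x \<in> D2 A"
  have "(norm (the (A x)))\<^sup>2 + (norm x)\<^sup>2 = cmod (cinner (SQ A x) x)"
    unfolding SQ_inner[OF x] norm_of_real by simp
  also have "\<dots> \<le> norm (SQ A x) * norm x" by (rule Cauchy_Schwarz_c)
  finally show ?thesis .
qed

lemma SQ_norm_ge2: "x \<in> D2 A \<Longrightarrow> norm x \<le> norm (SQ A x)"
proof -
  assume x: "x \<in> D2 A"
  have "norm x * norm x \<le> norm (SQ A x) * norm x"
    using SQ_norm_ge[OF x] by (simp add: power2_eq_square) (smt (verit) zero_le_square)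
  then show ?thesis by (cases "norm x = 0") (auto simp: mult_le_cancel_right)
qed

lemma RES_norm: "norm (RES A h) \<le> norm h"
  using SQ_norm_ge2[OF RES(1)] RES(2) by simp

lemma D2_dense: "closure (D2 A) = UNIV"
proof (rule dense_of_orth)
  show "0 \<in> D2 A" by (rule D2_zero)
  show "\<And>x y. x \<in> D2 A \<Longrightarrow> y \<in> D2 A \<Longrightarrow> x + y \<in> D2 A" by (rule D2_add)
  show "\<And>c x. x \<in> D2 A \<Longrightarrow> scaleC c x \<in> D2 A" by (rule D2_scale)
  fix w assume orth: "\<And>y. y \<in> D2 A \<Longrightarrow> cinner y w = 0"
  define u where "u = RES A w"
  have u: "u \<in> D2 A" "SQ A u = w" unfolding u_def by (simp_all add: RES)
  have "cinner u (SQ A u) = 0" using orth[OF u(1)] u(2) by simp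
  then have "cinner (SQ A u) u = 0" by (simp add: SQ_sym[OF u(1) u(1)])
  then have "(norm (the (A u)))\<^sup>2 + (norm u)\<^sup>2 = 0" unfolding SQ_inner[OF u(1)] by (simp only: of_real_eq_0_iff)
  then have "u = 0" by (simp add: add_nonneg_eq_0_iff)
  then show "w = 0" using u(2) SQ_scale[OF D2_zero, of 0] by simp
qed

end



lemma SQ_bound:
  fixes A B :: "('a::chilbert_space) op"
  assumes sA: "self_adjoint A" and sB: "self_adjoint B" and eq: "D2 A = D2 B"
  shows "\<exists>K\<ge>0. \<forall>x\<in>D2 A. norm (SQ B x) \<le> K * norm (SQ A x)"
proof -
  define I where "I = D2 A - {0}"
  define g where "g = (\<lambda>y. scaleC (of_real (1 / norm y)) (RES A (SQ B y)))"
  have "\<exists>K. \<forall>y\<in>I. norm (g y) \<le> K"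
  proof (rule ubp)
    fix x
    show "\<exists>K. \<forall>y\<in>I. cmod (cinner x (g y)) \<le> K"
    proof (intro exI ballI)
      fix y assume y: "y \<in> I"
      then have yA: "y \<in> D2 A" and yB: "y \<in> D2 B" and y0: "y \<noteq> 0" using eq unfolding I_def by auto
      have rB: "RES A x \<in> D2 B" using RES(1)[OF sA] eq by simp
      have "cinner x (RES A (SQ B y)) = cinner (RES A x) (SQ B y)" by (rule RES_sym[OF sA, symmetric])
      also have "\<dots> = cinner (SQ B (RES A x)) y" by (rule SQ_sym[OF sB rB yB, symmetric])
      finally have "cmod (cinner x (RES A (SQ B y))) \<le> norm (SQ B (RES A x)) * norm y"
        using Cauchy_Schwarz_c by metis
      moreover have "cinner x (g y) = of_real (1 / norm y) * cinner x (RES A (SQ B y))"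
        unfolding g_def by (rule cinner_scaleC_right)
      ultimately have "cmod (cinner x (g y)) = (1 / norm y) * cmod (cinner x (RES A (SQ B y)))"
        by (simp add: norm_mult norm_divide)
      also have "\<dots> \<le> (1 / norm y) * (norm (SQ B (RES A x)) * norm y)"
        using \<open>cmod (cinner x (RES A (SQ B y))) \<le> _\<close> by (intro mult_left_mono) auto
      also have "\<dots> = norm (SQ B (RES A x))" using y0 by simp
      finally show "cmod (cinner x (g y)) \<le> norm (SQ B (RES A x))" .
    qed
  qed
  then obtain K where K: "\<And>y. y \<in> I \<Longrightarrow> norm (g y) \<le> K" by blast
  define K' where "K' = max K 0"
  have K'0: "K' \<ge> 0" unfolding K'_def by simp
  have Rb: "norm (RES A (SQ B y)) \<le> K' * norm y" if yA: "y \<in> D2 A" for y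
  proof (cases "y = 0")
    case True
    then have "SQ B y = 0" using SQ_scale[OF sB D2_zero[OF sB], of 0] by simp
    then show ?thesis using True RES_zero[OF sA] by simp
  next
    case False
    then have "y \<in> I" using yA unfolding I_def by simp
    then have "norm (g y) \<le> K'" using K unfolding K'_def by fastforce
    moreover have "norm (g y) = norm (RES A (SQ B y)) / norm y"
      unfolding g_def norm_scaleC norm_of_real using False by simp
    ultimately show ?thesis using False by (simp add: field_simps)
  qed
  have "norm (SQ B x) \<le> K' * norm (SQ A x)" if x: "x \<in> D2 A" for x
  proof (rule dense_bound[OF D2_dense[OF sA]])
    show "0 \<le> K' * norm (SQ A x)" using K'0 by simp
    fix y assume yA: "y \<in> D2 A"
    have xB: "x \<in> D2 B" and yB: "y \<in> D2 B" using x yA eq by auto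
    have "cinner (SQ B x) y = cinner x (SQ B y)" by (rule SQ_sym[OF sB xB yB])
    also have "\<dots> = cinner x (SQ A (RES A (SQ B y)))" by (simp only: RES(2)[OF sA])
    also have "\<dots> = cinner (SQ A x) (RES A (SQ B y))" by (rule SQ_sym[OF sA x RES(1)[OF sA], symmetric])
    finally have "cmod (cinner (SQ B x) y) \<le> norm (SQ A x) * norm (RES A (SQ B y))"
      using Cauchy_Schwarz_c by metis
    also have "\<dots> \<le> norm (SQ A x) * (K' * norm y)" by (intro mult_left_mono Rb yA) simp
    finally show "cmod (cinner (SQ B x) y) \<le> K' * norm (SQ A x) * norm y" by (simp add: mult_ac)
  qed
  then show ?thesis using K'0 by blast
qed



lemma logconv:
  fixes b :: "nat \<Rightarrow> real"
  assumes nn: "\<And>n. b n \<ge> 0" and lc: "\<And>n. (b (Suc n))\<^sup>2 \<le> b n * b (Suc (Suc n))"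
    and bd: "\<And>n. b n \<le> M * c ^ n" and c: "c > 0"
  shows "b 1 \<le> c * b 0"
proof (rule ccontr)
  assume "\<not> b 1 \<le> c * b 0"
  then have gt: "b 1 > c * b 0" by simp
  have b0: "b 0 > 0"
  proof (rule ccontr)
    assume "\<not> b 0 > 0"
    then have "b 0 = 0" using nn[of 0] by simp
    then have "(b 1)\<^sup>2 \<le> 0" using lc[of 0] by simp
    then have "b 1 = 0" by simp
    then show False using gt \<open>b 0 = 0\<close> by simp
  qed
  define r where "r = b 1 / b 0"
  have rc: "r > c" unfolding r_def using gt b0 by (simp add: field_simps)
  have P: "b n > 0 \<and> b (Suc n) \<ge> r * b n" for n
  proof (induction n)
    case 0
    then show ?case using b0 unfolding r_def by simp
  next
    case (Suc n)
    then have pos: "b (Suc n) > 0" using rc c by (smt (verit) mult_pos_pos)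
    have "b (Suc n) * (r * b n) \<le> (b (Suc n))\<^sup>2"
      using Suc pos by (simp add: power2_eq_square mult_left_mono)
    also have "\<dots> \<le> b n * b (Suc (Suc n))" by (rule lc)
    finally have "b n * (r * b (Suc n)) \<le> b n * b (Suc (Suc n))" by (simp add: mult_ac)
    then have "r * b (Suc n) \<le> b (Suc (Suc n))" using Suc by (simp add: mult_le_cancel_left)
    then show ?case using pos by simp
  qed
  have low: "b n \<ge> r ^ n * b 0" for n
  proof (induction n)
    case 0 then show ?case by simp
  next
    case (Suc n)
    have "r ^ Suc n * b 0 = r * (r ^ n * b 0)" by simp
    also have "\<dots> \<le> r * b n" using Suc rc c by (intro mult_left_mono) auto
    also have "\<dots> \<le> b (Suc n)" using P[of n] by simp
    finally show ?case .
  qed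
  have "1 < r / c" using rc c by simp
  then obtain n where n: "M / b 0 < (r / c) ^ n" using real_arch_pow by blast
  have "r ^ n * b 0 \<le> M * c ^ n" using low[of n] bd[of n] by linarith
  then have "(r / c) ^ n * b 0 \<le> M" using c by (simp add: power_divide field_simps)
  then have "(r / c) ^ n \<le> M / b 0" using b0 by (simp add: field_simps)
  then show False using n by simp
qed

lemma form_bound:
  fixes A B :: "('a::chilbert_space) op"
  assumes sA: "self_adjoint A" and sB: "self_adjoint B" and eq: "D2 A = D2 B"
  shows "\<exists>C>0. \<forall>x\<in>D2 A. (norm (the (B x)))\<^sup>2 + (norm x)\<^sup>2 \<le> C * ((norm (the (A x)))\<^sup>2 + (norm x)\<^sup>2)"
proof -
  obtain K where K0: "K \<ge> 0" and K: "\<And>x. x \<in> D2 A \<Longrightarrow> norm (SQ B x) \<le> K * norm (SQ A x)"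
    using SQ_bound[OF sA sB eq] by blast
  define C where "C = K + 1"
  have C0: "C > 0" unfolding C_def using K0 by simp
  have KC: "norm (SQ B x) \<le> C * norm (SQ A x)" if "x \<in> D2 A" for x
  proof -
    have "norm (SQ B x) \<le> K * norm (SQ A x)" using K[OF that] .
    also have "\<dots> \<le> C * norm (SQ A x)" unfolding C_def by (intro mult_right_mono) auto
    finally show ?thesis .
  qed
  define R where "R = RES A"
  define Kop where "Kop = (\<lambda>v. SQ B (R v))"
  define q where "q = (\<lambda>a b. cinner (R a) b)"
  have RD: "R v \<in> D2 A" "R v \<in> D2 B" for v unfolding R_def using RES(1)[OF sA] eq by auto
  have F1: "norm (Kop v) \<le> C * norm v" for v
    unfolding Kop_def using KC[OF RD(1)] RES(2)[OF sA] unfolding R_def by simp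
  have F2: "q (Kop a) b = q a (Kop b)" for a b
  proof -
    have "q (Kop a) b = cinner (SQ B (R a)) (R b)" unfolding q_def Kop_def R_def by (rule RES_sym[OF sA])
    also have "\<dots> = cinner (R a) (SQ B (R b))" by (rule SQ_sym[OF sB RD(2) RD(2)])
    finally show ?thesis unfolding q_def Kop_def .
  qed
  have F3: "q a a = of_real ((norm (the (A (R a))))\<^sup>2 + (norm (R a))\<^sup>2)" for a
  proof -
    have "q a a = cinner (R a) (SQ A (R a))" unfolding q_def R_def by (simp only: RES(2)[OF sA])
    also have "\<dots> = cnj (cinner (SQ A (R a)) (R a))" by (rule cinner_commute)
    also have "\<dots> = of_real ((norm (the (A (R a))))\<^sup>2 + (norm (R a))\<^sup>2)"
      by (simp only: SQ_inner[OF sA RD(1)] complex_cnj_complex_of_real)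
    finally show ?thesis .
  qed
  have F3': "Re (q a a) \<ge> 0" for a unfolding F3 by simp
  have F4: "Re (q a a) \<le> (norm a)\<^sup>2" for a
  proof -
    have "Re (q a a) \<le> cmod (q a a)" by (rule complex_Re_le_cmod)
    also have "\<dots> \<le> norm (R a) * norm a" unfolding q_def by (rule Cauchy_Schwarz_c)
    also have "\<dots> \<le> norm a * norm a" unfolding R_def by (intro mult_right_mono RES_norm[OF sA]) auto
    finally show ?thesis by (simp add: power2_eq_square)
  qed
  have herm: "q b a = cnj (q a b)" for a b
    unfolding q_def R_def by (metis RES_sym[OF sA] cinner_commute)
  have F5: "(cmod (q a b))\<^sup>2 \<le> Re (q a a) * Re (q b b)" for a b
  proof (rule complex_cs_aux)
    fix s :: complex
    have exp: "q (a + scaleC s b) (a + scaleC s b) = q a a + s * q a b + cnj s * q b a + cnj s * s * q b b"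
      unfolding q_def R_def RES_add[OF sA] RES_scale[OF sA]
      by (simp add: cinner_add_left cinner_add_right cinner_scaleC_left cinner_scaleC_right algebra_simps)
    have r1: "Re (cnj s * q b a) = Re (s * q a b)"
    proof -
      have "cnj s * q b a = cnj (s * q a b)" by (simp only: herm[of a b] complex_cnj_mult complex_cnj_cnj)
      then show ?thesis by (simp only: cnj.sel(1))
    qed
    have r2: "Re (cnj s * s * q b b) = (cmod s)\<^sup>2 * Re (q b b)"
    proof -
      have "cnj s * s = of_real ((cmod s)\<^sup>2)" using complex_norm_square[of s] by (simp add: mult.commute)
      moreover have "q b b = of_real (Re (q b b))" unfolding F3 by simp
      ultimately have "cnj s * s * q b b = of_real ((cmod s)\<^sup>2 * Re (q b b))"
        by (metis of_real_mult)
      then show ?thesis by (simp only: Re_complex_of_real)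
    qed
    have "Re (q (a + scaleC s b) (a + scaleC s b)) = Re (q a a) + Re (s * q a b)
        + Re (cnj s * q b a) + Re (cnj s * s * q b b)"
      unfolding exp by (simp only: plus_complex.sel)
    then show "0 \<le> Re (q a a) + 2 * Re (s * q a b) + (cmod s)\<^sup>2 * Re (q b b)"
      using F3'[of "a + scaleC s b"] r1 r2 by linarith
  qed (rule F3')
  have "(norm (the (B x)))\<^sup>2 + (norm x)\<^sup>2 \<le> C * ((norm (the (A x)))\<^sup>2 + (norm x)\<^sup>2)"
    if x: "x \<in> D2 A" for x
  proof -
    define u where "u = SQ A x"
    have Ru: "R u = x" unfolding u_def R_def by (rule RES_SQ[OF sA x])
    define b where "b = (\<lambda>n. Re (q ((Kop ^^ n) u) ((Kop ^^ n) u)))"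
    have bn: "b n \<ge> 0" for n unfolding b_def by (rule F3')
    have nK: "norm ((Kop ^^ n) u) \<le> C ^ n * norm u" for n
    proof (induction n)
      case 0 then show ?case by simp
    next
      case (Suc n)
      have "norm ((Kop ^^ Suc n) u) \<le> C * norm ((Kop ^^ n) u)" using F1 by simp
      also have "\<dots> \<le> C * (C ^ n * norm u)" using Suc C0 by (intro mult_left_mono) auto
      finally show ?case by simp
    qed
    have bd: "b n \<le> (norm u)\<^sup>2 * (C\<^sup>2) ^ n" for n
    proof -
      have "b n \<le> (norm ((Kop ^^ n) u))\<^sup>2" unfolding b_def by (rule F4)
      also have "\<dots> \<le> (C ^ n * norm u)\<^sup>2" using nK[of n] by (rule power_mono) auto
      also have "\<dots> = (norm u)\<^sup>2 * (C\<^sup>2) ^ n" by (simp add: power_mult_distrib power_mult[symmetric] mult.commute)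
      finally show ?thesis .
    qed
    have lc: "(b (Suc n))\<^sup>2 \<le> b n * b (Suc (Suc n))" for n
    proof -
      define v where "v = (Kop ^^ n) u"
      have e: "q ((Kop ^^ Suc n) u) ((Kop ^^ Suc n) u) = q v ((Kop ^^ Suc (Suc n)) u)"
        unfolding v_def by (simp add: F2)
      have "b (Suc n) \<le> cmod (q v ((Kop ^^ Suc (Suc n)) u))"
        unfolding b_def e by (rule complex_Re_le_cmod)
      then have "(b (Suc n))\<^sup>2 \<le> (cmod (q v ((Kop ^^ Suc (Suc n)) u)))\<^sup>2"
        using bn[of "Suc n"] by (rule power_mono)
      also have "\<dots> \<le> b n * b (Suc (Suc n))" unfolding b_def v_def by (rule F5)
      finally show ?thesis .
    qed
    have b1: "b 1 \<le> C\<^sup>2 * b 0" by (rule logconv[OF bn lc bd]) (use C0 in simp)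
    have "(cmod (q u (Kop u)))\<^sup>2 \<le> b 0 * b 1" using F5[of u "Kop u"] unfolding b_def by simp
    also have "\<dots> \<le> b 0 * (C\<^sup>2 * b 0)" using b1 bn[of 0] by (intro mult_left_mono) auto
    also have "\<dots> = (C * b 0)\<^sup>2" by (simp add: power2_eq_square)
    finally have "(cmod (q u (Kop u)))\<^sup>2 \<le> (C * b 0)\<^sup>2" .
    then have cm: "cmod (q u (Kop u)) \<le> C * b 0"
      by (rule power2_le_imp_le) (use C0 bn[of 0] in simp)
    have qe: "q u (Kop u) = of_real ((norm (the (B x)))\<^sup>2 + (norm x)\<^sup>2)"
    proof -
      have xB: "x \<in> D2 B" using x eq by simp
      have "q u (Kop u) = cinner x (SQ B x)" unfolding q_def Kop_def Ru ..
      also have "\<dots> = cnj (cinner (SQ B x) x)" by (rule cinner_commute)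
      also have "\<dots> = of_real ((norm (the (B x)))\<^sup>2 + (norm x)\<^sup>2)"
        by (simp only: SQ_inner[OF sB xB] complex_cnj_complex_of_real)
      finally show ?thesis .
    qed
    have "b 0 = (norm (the (A x)))\<^sup>2 + (norm x)\<^sup>2" unfolding b_def F3 by (simp add: Ru)
    moreover have "cmod (q u (Kop u)) = (norm (the (B x)))\<^sup>2 + (norm x)\<^sup>2"
      unfolding qe norm_of_real by simp
    ultimately show ?thesis using cm by simp
  qed
  then show ?thesis using C0 by blast
qed



lemma dom_incl:
  fixes A B :: "('a::chilbert_space) op"
  assumes sA: "self_adjoint A" and sB: "self_adjoint B" and eq: "D2 A = D2 B"
  shows "dom A \<subseteq> dom B"
proof
  fix x assume x: "x \<in> dom A"
  obtain C where C0: "C > 0" and C: "\<And>y. y \<in> D2 A \<Longrightarrow>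
      (norm (the (B y)))\<^sup>2 + (norm y)\<^sup>2 \<le> C * ((norm (the (A y)))\<^sup>2 + (norm y)\<^sup>2)"
    using form_bound[OF sA sB eq] by blast
  define c where "c = \<i> * of_real (1::real)"
  define g where "g = the (A x) + scaleC c x"
  have "g \<in> closure (dom A)" using sa_dense[OF sA] by simp
  then obtain gs where gs: "\<And>n. gs n \<in> dom A" "gs \<longlonglongrightarrow> g" by (meson closure_sequential)
  have "\<forall>n. \<exists>y. y \<in> dom A \<and> the (A y) + scaleC c y = gs n"
  proof
    fix n
    obtain y where "y \<in> dom A" "the (A y) + scaleC c y = gs n"
      using sa_res_surj[OF sA, of 1 "gs n"] unfolding c_def by auto
    then show "\<exists>y. y \<in> dom A \<and> the (A y) + scaleC c y = gs n" by blast
  qed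
  then obtain xs where xs: "\<And>n. xs n \<in> dom A" and xg: "\<And>n. the (A (xs n)) + scaleC c (xs n) = gs n"
    using choice[of "\<lambda>n y. y \<in> dom A \<and> the (A y) + scaleC c y = gs n"] by blast
  have xs2: "xs n \<in> D2 A" for n
  proof -
    have "the (A (xs n)) = gs n - scaleC c (xs n)" using xg[of n] by (simp add: algebra_simps)
    moreover have "gs n - scaleC c (xs n) \<in> dom A"
      using sa_dom_diff[OF sA gs(1) sa_dom_scale[OF sA xs]] .
    ultimately show ?thesis unfolding D2_def using xs by simp
  qed
  have rn: "(norm (the (A y)))\<^sup>2 + (norm y)\<^sup>2 = (norm (the (A y) + scaleC c y))\<^sup>2" if "y \<in> dom A" for y
    using sa_res_norm[OF sA that, of 1] unfolding c_def by simp
  have diffeq: "the (A (xs n - y)) + scaleC c (xs n - y) = gs n - (the (A y) + scaleC c y)"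
    if "y \<in> dom A" for n y
    using sa_diff[OF sA xs that] xg[of n] by (simp add: scaleC_diff_right algebra_simps)
  have xconv: "xs \<longlonglongrightarrow> x"
  proof -
    have le: "norm (xs n - x) \<le> norm (gs n - g)" for n
    proof -
      have d: "xs n - x \<in> dom A" using sa_dom_diff[OF sA xs x] .
      have "(norm (xs n - x))\<^sup>2 \<le> (norm (the (A (xs n - x))))\<^sup>2 + (norm (xs n - x))\<^sup>2" by simp
      also have "\<dots> = (norm (gs n - g))\<^sup>2" unfolding rn[OF d] diffeq[OF x] g_def ..
      finally show ?thesis by (rule power2_le_imp_le) simp
    qed
    have tz: "(\<lambda>n. norm (gs n - g)) \<longlonglongrightarrow> 0"
      using tendsto_norm_zero[OF LIM_zero[OF gs(2)]] .
    have ev: "\<forall>\<^sub>F n in sequentially. norm (xs n - x) \<le> norm (gs n - g)"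
      by (rule always_eventually) (use le in blast)
    have "(\<lambda>n. xs n - x) \<longlonglongrightarrow> 0" by (rule Lim_null_comparison[OF ev tz])
    then show ?thesis by (rule LIM_zero_cancel)
  qed
  have xsB: "xs n \<in> dom B" for n using xs2[of n] eq unfolding D2_def by auto
  have Bd: "norm (the (B (xs n)) - the (B (xs m))) \<le> sqrt C * norm (gs n - gs m)" for n m
  proof -
    have d2: "xs n - xs m \<in> D2 A" using D2_diff[OF sA xs2 xs2] .
    have dA: "xs n - xs m \<in> dom A" using sa_dom_diff[OF sA xs xs] .
    have "the (A (xs n - xs m)) + scaleC c (xs n - xs m) = gs n - gs m"
      using diffeq[OF xs, of n m] xg[of m] by simp
    then have e1: "(norm (the (A (xs n - xs m))))\<^sup>2 + (norm (xs n - xs m))\<^sup>2 = (norm (gs n - gs m))\<^sup>2"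
      using rn[OF dA] by simp
    have e2: "the (B (xs n - xs m)) = the (B (xs n)) - the (B (xs m))"
      using sa_diff[OF sB xsB xsB] by simp
    have "(norm (the (B (xs n)) - the (B (xs m))))\<^sup>2 \<le> C * (norm (gs n - gs m))\<^sup>2"
      using C[OF d2] e1 e2 by (smt (verit) zero_le_power2)
    also have "\<dots> = (sqrt C * norm (gs n - gs m))\<^sup>2" using C0 by (simp add: power_mult_distrib)
    finally show ?thesis by (rule power2_le_imp_le) (use C0 in simp)
  qed
  have "Cauchy gs" using gs(2) by (rule LIMSEQ_imp_Cauchy)
  have "Cauchy (\<lambda>n. the (B (xs n)))"
  proof (rule metric_CauchyI)
    fix e :: real assume e: "e > 0"
    have sC: "sqrt C + 1 > 0" using C0 by (smt (verit) real_sqrt_ge_zero)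
    have "e / (sqrt C + 1) > 0" using e sC by (rule divide_pos_pos)
    then obtain N where N: "\<And>m n. m \<ge> N \<Longrightarrow> n \<ge> N \<Longrightarrow> dist (gs m) (gs n) < e / (sqrt C + 1)"
      using \<open>Cauchy gs\<close> unfolding Cauchy_def by blast
    show "\<exists>N. \<forall>m\<ge>N. \<forall>n\<ge>N. dist (the (B (xs m))) (the (B (xs n))) < e"
    proof (intro exI allI impI)
      fix m n assume mn: "m \<ge> N" "n \<ge> N"
      have "dist (the (B (xs m))) (the (B (xs n))) \<le> sqrt C * norm (gs m - gs n)"
        using Bd[of m n] by (simp add: dist_norm)
      also have "\<dots> \<le> sqrt C * (e / (sqrt C + 1))"
        using N[OF mn] C0 by (intro mult_left_mono) (auto simp: dist_norm)
      also have "\<dots> < e" using e sC by (simp add: field_simps)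
      finally show "dist (the (B (xs m))) (the (B (xs n))) < e" .
    qed
  qed
  then obtain b where "(\<lambda>n. the (B (xs n))) \<longlonglongrightarrow> b" using Cauchy_convergent convergent_def by blast
  then have "B x = Some b" using sa_closed[OF sB xsB xconv] by simp
  then show "x \<in> dom B" by auto
qed



lemma dom_op_mult_self: "dom (op_mult A A) = D2 A"
  unfolding op_mult_def D2_def map_comp_def by (auto split: option.splits)

lemma op_plus_eval:
  fixes A B :: "('a::complex_inner) op"
  assumes "x \<in> dom A" "x \<in> dom B"
  shows "op_plus A (op_scale \<i> B) x = Some (the (A x) + scaleC \<i> (the (B x)))"
  using assms unfolding op_plus_def op_scale_def by auto

lemma op_plus_dom:
  fixes A B :: "('a::complex_inner) op"
  shows "x \<in> dom (op_plus A (op_scale \<i> B)) \<longleftrightarrow> x \<in> dom A \<and> x \<in> dom B"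
  unfolding op_plus_def op_scale_def by (auto split: option.splits)

lemma pos_zero:
  fixes A :: "('a::complex_inner) op"
  assumes pA: "positive_op A" and y: "y \<in> dom A" and z: "Re (cinner (the (A y)) y) = 0"
  shows "the (A y) = 0"
proof -
  have sa: "self_adjoint A" and pos: "\<And>x. x \<in> dom A \<Longrightarrow> 0 \<le> Re (cinner (the (A x)) x)"
    using pA unfolding positive_op_def by auto
  have orth0: "cinner (the (A y)) v = 0" if v: "v \<in> dom A" for v
  proof -
    have "(cmod (cinner (the (A y)) v))\<^sup>2 \<le> Re (cinner (the (A y)) y) * Re (cinner (the (A v)) v)"
    proof (rule complex_cs_aux)
      fix s :: complex
      have w: "y + scaleC s v \<in> dom A" using sa_dom_add[OF sa y sa_dom_scale[OF sa v]] .
      have Aw: "the (A (y + scaleC s v)) = the (A y) + scaleC s (the (A v))"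
        using sa_add[OF sa y sa_dom_scale[OF sa v]] sa_scale[OF sa v] by simp
      have exp: "cinner (the (A (y + scaleC s v))) (y + scaleC s v) =
          cinner (the (A y)) y + s * cinner (the (A y)) v + cnj s * cinner (the (A v)) y
          + cnj s * s * cinner (the (A v)) v"
        unfolding Aw by (simp add: cinner_add_left cinner_add_right cinner_scaleC_left cinner_scaleC_right algebra_simps)
      have r1: "Re (cnj s * cinner (the (A v)) y) = Re (s * cinner (the (A y)) v)"
      proof -
        have "cinner (the (A v)) y = cinner v (the (A y))" by (rule sa_sym[OF sa v y])
        also have "\<dots> = cnj (cinner (the (A y)) v)" by (rule cinner_commute)
        finally have "cnj s * cinner (the (A v)) y = cnj (s * cinner (the (A y)) v)" by simp
        then show ?thesis by (simp only: cnj.sel(1))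
      qed
      have r2: "Re (cnj s * s * cinner (the (A v)) v) = (cmod s)\<^sup>2 * Re (cinner (the (A v)) v)"
      proof -
        have "cnj s * s = of_real ((cmod s)\<^sup>2)" using complex_norm_square[of s] by (simp add: mult.commute)
        moreover have "cinner (the (A v)) v = of_real (Re (cinner (the (A v)) v))" by (rule sa_real[OF sa v])
        ultimately have "cnj s * s * cinner (the (A v)) v = of_real ((cmod s)\<^sup>2 * Re (cinner (the (A v)) v))"
          by (metis of_real_mult)
        then show ?thesis by (simp only: Re_complex_of_real)
      qed
      have "Re (cinner (the (A (y + scaleC s v))) (y + scaleC s v)) = Re (cinner (the (A y)) y)
          + Re (s * cinner (the (A y)) v) + Re (cnj s * cinner (the (A v)) y) + Re (cnj s * s * cinner (the (A v)) v)"
        unfolding exp by (simp only: plus_complex.sel)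
      then show "0 \<le> Re (cinner (the (A y)) y) + 2 * Re (s * cinner (the (A y)) v) + (cmod s)\<^sup>2 * Re (cinner (the (A v)) v)"
        using pos[OF w] r1 r2 by linarith
    qed (rule pos[OF v])
    then have "(cmod (cinner (the (A y)) v))\<^sup>2 \<le> 0" using z by simp
    then show ?thesis by simp
  qed
  show ?thesis
  proof (intro dense_orth_zero[OF sa_dense[OF sa]])
    fix x assume "x \<in> dom A"
    have "cinner x (the (A y)) = cnj (cinner (the (A y)) x)" by (rule cinner_commute)
    then show "cinner x (the (A y)) = 0" using orth0[OF \<open>x \<in> dom A\<close>] by simp
  qed
qed

lemma kill:
  fixes A B :: "('a::complex_inner) op"
  assumes sA: "self_adjoint A" and sB: "self_adjoint B" and pos: "positive_op A \<or> positive_op B"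
    and yA: "y \<in> dom A" and yB: "y \<in> dom B" and e: "the (A y) + scaleC \<i> (the (B y)) = 0"
  shows "the (A y) = 0 \<and> the (B y) = 0"
proof -
  have Ay: "the (A y) = - scaleC \<i> (the (B y))" using e by (simp add: eq_neg_iff_add_eq_0)
  have rA: "cinner (the (A y)) y = of_real (Re (cinner (the (A y)) y))" by (rule sa_real[OF sA yA])
  have rB: "cinner (the (B y)) y = of_real (Re (cinner (the (B y)) y))" by (rule sa_real[OF sB yB])
  have "cinner (the (A y)) y = \<i> * cinner (the (B y)) y"
    unfolding Ay by (simp add: cinner_minus_left cinner_scaleC_left)
  then have "of_real (Re (cinner (the (A y)) y)) = \<i> * of_real (Re (cinner (the (B y)) y))"
    using rA rB by simp
  then have zA: "Re (cinner (the (A y)) y) = 0" and zB: "Re (cinner (the (B y)) y) = 0"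
    by (simp_all add: complex_eq_iff)
  show ?thesis
  proof (cases "positive_op A")
    case True
    then have "the (A y) = 0" using pos_zero[OF True yA zA] by simp
    then have "scaleC \<i> (the (B y)) = 0" using e by simp
    then have "the (B y) = 0" by (simp add: scaleC_eq_0_iff)
    then show ?thesis using \<open>the (A y) = 0\<close> by simp
  next
    case False
    then have pB: "positive_op B" using pos by simp
    then have "the (B y) = 0" using pos_zero[OF pB yB zB] by simp
    then show ?thesis using e by simp
  qed
qed

lemma zero_on_D2:
  fixes A :: "('a::chilbert_space) op"
  assumes sa: "self_adjoint A" and z: "\<And>x. x \<in> D2 A \<Longrightarrow> the (A x) = 0"
  shows "A y = Some 0"
proof -
  have Az: "the (A w) = 0" if w: "w \<in> dom A" for w
  proof -
    define u where "u = RES A (the (A w))"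
    have u: "u \<in> D2 A" "SQ A u = the (A w)" unfolding u_def by (simp_all add: RES[OF sa])
    have uA: "u \<in> dom A" using u(1) unfolding D2_def by simp
    have "cinner (SQ A u) u = cinner w (the (A u))" unfolding u(2) by (rule sa_sym[OF sa w uA])
    also have "\<dots> = 0" using z[OF u(1)] by simp
    finally have "(norm (the (A u)))\<^sup>2 + (norm u)\<^sup>2 = 0"
      unfolding SQ_inner[OF sa u(1)] by (simp only: of_real_eq_0_iff)
    then have "u = 0" by (simp add: add_nonneg_eq_0_iff)
    then show ?thesis using u(2) SQ_scale[OF sa D2_zero[OF sa], of 0] by simp
  qed
  show ?thesis unfolding sa_adj[OF sa] using Az by simp
qed

theorem theorem2p10:
  fixes A B :: "('a::chilbert_space) op"
  assumes "self_adjoint A" and "self_adjoint B"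
    and "positive_op A \<or> positive_op B"
    and "dom (op_mult A A) = dom (op_mult B B)"
    and "\<forall>x\<in>dom (op_mult (op_plus A (op_scale \<i> B)) (op_plus A (op_scale \<i> B))).
           op_mult (op_plus A (op_scale \<i> B)) (op_plus A (op_scale \<i> B)) x = Some 0"
  shows "dom (op_plus A (op_scale \<i> B)) = UNIV \<and> (\<forall>x. op_plus A (op_scale \<i> B) x = Some 0)"
proof -
  note sA = assms(1) and sB = assms(2) and pos = assms(3)
  define T where "T = op_plus A (op_scale \<i> B)"
  have eq: "D2 A = D2 B" using assms(4) by (simp add: dom_op_mult_self)
  have domeq: "dom A = dom B" using dom_incl[OF sA sB eq] dom_incl[OF sB sA eq[symmetric]] by blast
  have nil: "the (A x) = 0 \<and> the (B x) = 0" if x: "x \<in> D2 A" for x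
  proof -
    have xA: "x \<in> dom A" and AxA: "the (A x) \<in> dom A" using x unfolding D2_def by auto
    have xB: "x \<in> dom B" and BxB: "the (B x) \<in> dom B" using x eq unfolding D2_def by auto
    define y where "y = the (A x) + scaleC \<i> (the (B x))"
    have Tx: "T x = Some y" unfolding T_def y_def using op_plus_eval[OF xA xB] .
    have yA: "y \<in> dom A" unfolding y_def
      using sa_dom_add[OF sA AxA sa_dom_scale[OF sA, of "the (B x)"]] BxB domeq by simp
    have yB: "y \<in> dom B" using yA domeq by simp
    have Ty: "T y = Some (the (A y) + scaleC \<i> (the (B y)))" unfolding T_def using op_plus_eval[OF yA yB] .
    have "op_mult T T x = T y" unfolding op_mult_def using Tx by simp
    then have "x \<in> dom (op_mult T T)" using Ty by auto
    then have "op_mult T T x = Some 0" using assms(5) unfolding T_def by blast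
    then have "the (A y) + scaleC \<i> (the (B y)) = 0" using \<open>op_mult T T x = T y\<close> Ty by simp
    then have k: "the (A y) = 0 \<and> the (B y) = 0" using kill[OF sA sB pos yA yB] by blast
    have "cinner y y = cinner (the (A x)) y + cnj \<i> * cinner (the (B x)) y"
      unfolding y_def by (simp add: cinner_add_left cinner_scaleC_left)
    also have "cinner (the (A x)) y = cinner x (the (A y))" by (rule sa_sym[OF sA xA yA])
    also have "cinner (the (B x)) y = cinner x (the (B y))" by (rule sa_sym[OF sB xB yB])
    finally have "cinner y y = 0" using k by simp
    then have "y = 0" by (simp add: cinner_eq_zero_iff)
    then show ?thesis using kill[OF sA sB pos xA xB] unfolding y_def by blast
  qed
  have A0: "A y = Some 0" for y by (rule zero_on_D2[OF sA]) (use nil in blast)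
  have B0: "B y = Some 0" for y by (rule zero_on_D2[OF sB]) (use nil eq in blast)
  have "T x = Some 0" for x
  proof -
    have xA: "x \<in> dom A" and xB: "x \<in> dom B" using A0 B0 by auto
    have "T x = Some (the (A x) + scaleC \<i> (the (B x)))" unfolding T_def by (rule op_plus_eval[OF xA xB])
    then show ?thesis using A0[of x] B0[of x] by simp
  qed
  then show ?thesis unfolding T_def[symmetric] by auto
qed

end
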